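(* Let $I\subseteq\mathbb{R}$ be a nonempty open interval, let $f:I\to\mathbb{R}$ be Wright convex, and let $g:I\to\mathbb{R}$ be a convex function with $g|_{I\cap\mathbb{Q}}=f|_{I\cap\mathbb{Q}}$. Then for all $u,v>0$ and all $x\in I$ with $x+u+v\in I$, $$f(x+u+v)-f(x+u)-f(x+v)+f(x)=g(x+u+v)-g(x+u)-g(x+v)+g(x).$$
   Context: A function $f:I\to\mathbb{R}$ on an interval $I$ is called Wright convex if $f(tx+(1-t)y)+f((1-t)x+ty)\leq f(x)+f(y)$ for all $x,y\in I$ and $t\in[0,1]$. *)

theory Defs
  imports "HOL-Analysis.Analysis"
begin

definition wright_convex_on :: "real set \<Rightarrow> (real \<Rightarrow> real) \<Rightarrow> bool" where
  "wright_convex_on I f \<longleftrightarrow>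
     (\<forall>x\<in>I. \<forall>y\<in>I. \<forall>t\<in>{0..1::real}.
        f (t * x + (1 - t) * y) + f ((1 - t) * x + t * y) \<le> f x + f y)"

end

theory Submission
  imports Defs
begin

definition D2 :: "(real \<Rightarrow> real) \<Rightarrow> real \<Rightarrow> real \<Rightarrow> real \<Rightarrow> real" where
  "D2 f y u v = f (y + u + v) - f (y + u) - f (y + v) + f y"

lemma D2_split_u: "D2 f y (u1 + u2) v = D2 f y u1 v + D2 f (y + u1) u2 v"
  unfolding D2_def by (simp add: algebra_simps)

lemma D2_sym: "D2 f y u v = D2 f y v u"
  unfolding D2_def by (simp add: algebra_simps)

lemma D2_nonneg:
  assumes W: "wright_convex_on I f" and iv: "is_interval I"
    and y: "y \<in> I" and y3: "y + u + v \<in> I" and u: "u \<ge> 0" and v: "v \<ge> 0"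
  shows "D2 f y u v \<ge> 0"
proof (cases "u + v = 0")
  case True
  then have "u = 0" "v = 0" using u v by auto
  then show ?thesis by (simp add: D2_def)
next
  case False
  then have uv: "u + v > 0" using u v by auto
  define t where "t = v / (u + v)"
  have t01: "t \<in> {0..1}" using u v uv by (auto simp: t_def field_simps)
  have tv: "t * (u + v) = v" using uv by (simp add: t_def)
  have e1: "t * y + (1 - t) * (y + u + v) = y + u"
  proof -
    have "t * y + (1 - t) * (y + u + v) = y + (u + v) - t * (u + v)" by (simp add: algebra_simps)
    then show ?thesis using tv by simp
  qed
  have e2: "(1 - t) * y + t * (y + u + v) = y + v"
  proof -
    have "(1 - t) * y + t * (y + u + v) = y + t * (u + v)" by (simp add: algebra_simps)
    then show ?thesis using tv by simp
  qed
  have "f (t * y + (1 - t) * (y + u + v)) + f ((1 - t) * y + t * (y + u + v)) \<le> f y + f (y + u + v)"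
    using W y y3 t01 unfolding wright_convex_on_def by blast
  then show ?thesis unfolding D2_def e1 e2 by simp
qed

lemma D2_mono:
  assumes W: "wright_convex_on I f" and iv: "is_interval I"
    and X: "X \<in> I" and X3: "X + U + V \<in> I"
    and a: "a \<ge> 0" and u': "u' \<ge> 0" and v': "v' \<ge> 0"
    and au: "a + u' \<le> U" and vv: "v' \<le> V"
  shows "D2 f (X + a) u' v' \<le> D2 f X U V"
proof -
  have inI: "z \<in> I" if "X \<le> z" "z \<le> X + U + V" for z
    using mem_is_interval_1_I[OF iv X X3] that by blast
  have V0: "V \<ge> 0" using v' vv by linarith
  have U0: "U \<ge> 0" using a u' au by linarith
  have s1: "D2 f X U V = D2 f X a V + D2 f (X + a) u' V + D2 f (X + a + u') (U - a - u') V"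
    using D2_split_u[of f X a "U - a" V] D2_split_u[of f "X + a" u' "U - a - u'" V]
    by (simp add: add.assoc)
  have s2: "D2 f (X + a) u' V = D2 f (X + a) u' v' + D2 f (X + a + v') u' (V - v')"
  proof -
    have "D2 f (X + a) (v' + (V - v')) u' = D2 f (X + a) v' u' + D2 f (X + a + v') (V - v') u'"
      by (rule D2_split_u)
    then show ?thesis by (simp add: D2_sym[of f _ u'])
  qed
  have i1: "X + a + V \<in> I" by (rule inI) (use a V0 au u' in linarith)+
  have i2: "X + a + u' \<in> I" by (rule inI) (use a V0 au u' in linarith)+
  have i3: "X + a + v' \<in> I" by (rule inI) (use a V0 au u' vv v' in linarith)+
  have i4: "X + a + u' + V \<in> I" by (rule inI) (use a V0 au u' in linarith)+
  have i4eq: "X + a + v' + u' + (V - v') = X + a + u' + V" by simp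
  have n1: "D2 f X a V \<ge> 0"
    by (rule D2_nonneg[OF W iv X i1 a V0])
  have n2: "D2 f (X + a + u') (U - a - u') V \<ge> 0"
    by (rule D2_nonneg[OF W iv i2]) (use X3 au V0 in \<open>simp_all\<close>)
  have n3: "D2 f (X + a + v') u' (V - v') \<ge> 0"
    by (rule D2_nonneg[OF W iv i3]) (use i4 vv u' i4eq in \<open>simp_all add: add.assoc\<close>)
  show ?thesis using s1 s2 n1 n2 n3 by linarith
qed

lemma cont_pt:
  fixes g :: "real \<Rightarrow> real"
  assumes "open I" "continuous_on I g" "p \<in> I" "e > 0"
  shows "\<exists>d>0. \<forall>y. \<bar>y - p\<bar> < d \<longrightarrow> y \<in> I \<and> \<bar>g y - g p\<bar> < e"
proof -
  have "isCont g p" using assms continuous_on_eq_continuous_at by blast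
  then obtain d1 where d1: "d1 > 0" "\<forall>y. y \<noteq> p \<and> norm (y - p) < d1 \<longrightarrow> norm (g y - g p) < e"
    unfolding isCont_def LIM_eq using assms(4) by blast
  obtain d2 where d2: "d2 > 0" "ball p d2 \<subseteq> I"
    using assms(1,3) open_contains_ball by blast
  show ?thesis
  proof (intro exI[of _ "min d1 d2"] conjI allI impI)
    show "min d1 d2 > 0" using d1 d2 by simp
  next
    fix y assume "\<bar>y - p\<bar> < min d1 d2"
    then show "y \<in> I" using d2 by (auto simp: dist_real_def)
    show "\<bar>g y - g p\<bar> < e" using d1 \<open>\<bar>y - p\<bar> < min d1 d2\<close> assms(4)
      by (cases "y = p") auto
  qed
qed

theorem mainTheorem5:
  fixes I :: "real set" and f g :: "real \<Rightarrow> real"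
  assumes "is_interval I" and "open I" and "I \<noteq> {}"
    and "wright_convex_on I f"
    and "convex_on I g"
    and "\<And>q. q \<in> I \<Longrightarrow> q \<in> \<rat> \<Longrightarrow> g q = f q"
  shows "\<forall>u>0. \<forall>v>0. \<forall>x\<in>I. x + u + v \<in> I \<longrightarrow>
           f (x + u + v) - f (x + u) - f (x + v) + f x
         = g (x + u + v) - g (x + u) - g (x + v) + g x"
proof (intro allI impI ballI)
  fix u v x :: real
  assume u: "u > 0" and v: "v > 0" and x: "x \<in> I" and x3: "x + u + v \<in> I"
  note iv = assms(1) and W = assms(4) and fg = assms(6)
  have cg: "continuous_on I g" using convex_on_continuous assms(2,5) by blast
  have inI: "z \<in> I" if "x \<le> z" "z \<le> x + u + v" for z
    using mem_is_interval_1_I[OF iv x x3] that by blast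
  have x1: "x + u \<in> I" and x2: "x + v \<in> I" using inI u v by auto
  have key: "\<exists>d>0. d \<le> u / 2 \<and> d \<le> v / 2 \<and>
      (\<forall>c0 c1 c2. \<bar>c0 - x\<bar> < d \<longrightarrow> \<bar>c1 - (x + u)\<bar> < d \<longrightarrow> \<bar>c2 - (x + v)\<bar> < d \<longrightarrow>
        c0 \<in> I \<and> c1 \<in> I \<and> c2 \<in> I \<and> c1 + c2 - c0 \<in> I \<and>
        \<bar>D2 g c0 (c1 - c0) (c2 - c0) - D2 g x u v\<bar> < e)" if e: "e > 0" for e
  proof -
    have e4: "e / 4 > 0" using e by simp
    obtain d0 where d0: "d0 > 0" "\<forall>y. \<bar>y - x\<bar> < d0 \<longrightarrow> y \<in> I \<and> \<bar>g y - g x\<bar> < e/4"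
      using cont_pt[OF assms(2) cg x e4] by blast
    obtain d1 where d1: "d1 > 0" "\<forall>y. \<bar>y - (x+u)\<bar> < d1 \<longrightarrow> y \<in> I \<and> \<bar>g y - g (x+u)\<bar> < e/4"
      using cont_pt[OF assms(2) cg x1 e4] by blast
    obtain d2 where d2: "d2 > 0" "\<forall>y. \<bar>y - (x+v)\<bar> < d2 \<longrightarrow> y \<in> I \<and> \<bar>g y - g (x+v)\<bar> < e/4"
      using cont_pt[OF assms(2) cg x2 e4] by blast
    obtain d3 where d3: "d3 > 0" "\<forall>y. \<bar>y - (x+u+v)\<bar> < d3 \<longrightarrow> y \<in> I \<and> \<bar>g y - g (x+u+v)\<bar> < e/4"
      using cont_pt[OF assms(2) cg x3 e4] by blast
    define d where "d = min (min d0 d1) (min (min d2 (d3/3)) (min (u/2) (v/2)))"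
    have dpos: "d > 0" using d0 d1 d2 d3 u v by (simp add: d_def)
    show ?thesis
    proof (intro exI[of _ d] conjI allI impI)
      show "d > 0" "d \<le> u/2" "d \<le> v/2" using dpos by (auto simp: d_def)
    next
      fix c0 c1 c2
      assume h0: "\<bar>c0 - x\<bar> < d" and h1: "\<bar>c1 - (x + u)\<bar> < d" and h2: "\<bar>c2 - (x + v)\<bar> < d"
      have h3: "\<bar>(c1 + c2 - c0) - (x + u + v)\<bar> < d3" using h0 h1 h2 unfolding d_def by linarith
      have a0: "c0 \<in> I" "\<bar>g c0 - g x\<bar> < e/4" using d0 h0 unfolding d_def by auto
      have a1: "c1 \<in> I" "\<bar>g c1 - g (x+u)\<bar> < e/4" using d1 h1 unfolding d_def by auto
      have a2: "c2 \<in> I" "\<bar>g c2 - g (x+v)\<bar> < e/4" using d2 h2 unfolding d_def by auto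
      have a3: "c1 + c2 - c0 \<in> I" "\<bar>g (c1 + c2 - c0) - g (x+u+v)\<bar> < e/4" using d3 h3 by auto
      have eq: "D2 g c0 (c1 - c0) (c2 - c0) = g (c1 + c2 - c0) - g c1 - g c2 + g c0"
      proof -
        have h: "c0 + (c1 - c0) + (c2 - c0) = c1 + c2 - c0" "c0 + (c1 - c0) = c1" "c0 + (c2 - c0) = c2" "c1 + (c2 - c0) = c1 + c2 - c0" by simp_all
        show ?thesis by (simp only: D2_def h)
      qed
      show "c0 \<in> I" "c1 \<in> I" "c2 \<in> I" "c1 + c2 - c0 \<in> I" using a0 a1 a2 a3 by auto
      show "\<bar>D2 g c0 (c1 - c0) (c2 - c0) - D2 g x u v\<bar> < e"
        using eq D2_def[of g x u v] a0 a1 a2 a3 by linarith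
    qed
  qed
  have ratD: "D2 g c0 (c1 - c0) (c2 - c0) = D2 f c0 (c1 - c0) (c2 - c0)"
    if "c0 \<in> I" "c1 \<in> I" "c2 \<in> I" "c1 + c2 - c0 \<in> I" "c0 \<in> \<rat>" "c1 \<in> \<rat>" "c2 \<in> \<rat>"
    for c0 c1 c2
  proof -
    have r3: "c1 + c2 - c0 \<in> \<rat>" using that by (simp add: Rats_add Rats_diff)
    have h: "c0 + (c1 - c0) + (c2 - c0) = c1 + c2 - c0" "c0 + (c1 - c0) = c1" "c0 + (c2 - c0) = c2" "c1 + (c2 - c0) = c1 + c2 - c0" by simp_all
    have "g (c1 + c2 - c0) = f (c1 + c2 - c0)" using fg that r3 by blast
    moreover have "g c0 = f c0" "g c1 = f c1" "g c2 = f c2" using fg that by blast+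
    ultimately show ?thesis by (simp only: D2_def h)
  qed
  have lower: "D2 f x u v \<ge> D2 g x u v - e" if e: "e > 0" for e
  proof -
    obtain d where d: "d > 0" "d \<le> u/2" "d \<le> v/2" and P: "\<forall>c0 c1 c2. \<bar>c0 - x\<bar> < d \<longrightarrow> \<bar>c1 - (x + u)\<bar> < d \<longrightarrow> \<bar>c2 - (x + v)\<bar> < d \<longrightarrow>
        c0 \<in> I \<and> c1 \<in> I \<and> c2 \<in> I \<and> c1 + c2 - c0 \<in> I \<and>
        \<bar>D2 g c0 (c1 - c0) (c2 - c0) - D2 g x u v\<bar> < e"
      using key[OF e] by blast
    obtain c0 where c0: "c0 \<in> \<rat>" "x < c0" "c0 < x + d" using Rats_dense_in_real[of x "x+d"] d by auto
    obtain c1 where c1: "c1 \<in> \<rat>" "x + u - d < c1" "c1 < x + u" using Rats_dense_in_real[of "x+u-d" "x+u"] d by auto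
    obtain c2 where c2: "c2 \<in> \<rat>" "x + v - d < c2" "c2 < x + v" using Rats_dense_in_real[of "x+v-d" "x+v"] d by auto
    have pp: "c0 \<in> I \<and> c1 \<in> I \<and> c2 \<in> I \<and> c1 + c2 - c0 \<in> I \<and>
        \<bar>D2 g c0 (c1 - c0) (c2 - c0) - D2 g x u v\<bar> < e"
    proof -
      have "\<bar>c0 - x\<bar> < d" "\<bar>c1 - (x + u)\<bar> < d" "\<bar>c2 - (x + v)\<bar> < d"
        using c0 c1 c2 by (simp_all add: abs_less_iff)
      then show ?thesis using P by blast
    qed
    have "D2 f (x + (c0 - x)) (c1 - c0) (c2 - c0) \<le> D2 f x u v"
      by (rule D2_mono[OF W iv x x3]) (use c0 c1 c2 d in auto)
    then have "D2 f c0 (c1 - c0) (c2 - c0) \<le> D2 f x u v" by simp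
    then show ?thesis using ratD[of c0 c1 c2] pp c0 c1 c2 by linarith
  qed
  have upper: "D2 f x u v \<le> D2 g x u v + e" if e: "e > 0" for e
  proof -
    obtain d where d: "d > 0" "d \<le> u/2" "d \<le> v/2" and P: "\<forall>c0 c1 c2. \<bar>c0 - x\<bar> < d \<longrightarrow> \<bar>c1 - (x + u)\<bar> < d \<longrightarrow> \<bar>c2 - (x + v)\<bar> < d \<longrightarrow>
        c0 \<in> I \<and> c1 \<in> I \<and> c2 \<in> I \<and> c1 + c2 - c0 \<in> I \<and>
        \<bar>D2 g c0 (c1 - c0) (c2 - c0) - D2 g x u v\<bar> < e"
      using key[OF e] by blast
    obtain c0 where c0: "c0 \<in> \<rat>" "x - d < c0" "c0 < x" using Rats_dense_in_real[of "x-d" x] d by auto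
    obtain c1 where c1: "c1 \<in> \<rat>" "x + u < c1" "c1 < x + u + d" using Rats_dense_in_real[of "x+u" "x+u+d"] d by auto
    obtain c2 where c2: "c2 \<in> \<rat>" "x + v < c2" "c2 < x + v + d" using Rats_dense_in_real[of "x+v" "x+v+d"] d by auto
    have pp: "c0 \<in> I \<and> c1 \<in> I \<and> c2 \<in> I \<and> c1 + c2 - c0 \<in> I \<and>
        \<bar>D2 g c0 (c1 - c0) (c2 - c0) - D2 g x u v\<bar> < e"
    proof -
      have "\<bar>c0 - x\<bar> < d" "\<bar>c1 - (x + u)\<bar> < d" "\<bar>c2 - (x + v)\<bar> < d"
        using c0 c1 c2 by (simp_all add: abs_less_iff)
      then show ?thesis using P by blast
    qed
    have e3: "c0 + (c1 - c0) + (c2 - c0) = c1 + c2 - c0" by simp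
    have m: "c1 + (c2 - c0) \<in> I" using pp by (metis add_diff_eq)
    have "D2 f (c0 + (x - c0)) u v \<le> D2 f c0 (c1 - c0) (c2 - c0)"
      by (rule D2_mono[OF W iv]) (use c0 c1 c2 d pp e3 u v m in auto)
    then have "D2 f x u v \<le> D2 f c0 (c1 - c0) (c2 - c0)" by simp
    then show ?thesis using ratD[of c0 c1 c2] pp c0 c1 c2 by linarith
  qed
  have "D2 f x u v = D2 g x u v"
  proof (rule ccontr)
    assume ne: "D2 f x u v \<noteq> D2 g x u v"
    define e where "e = \<bar>D2 f x u v - D2 g x u v\<bar> / 2"
    have "e > 0" using ne by (simp add: e_def)
    then have "D2 g x u v - e \<le> D2 f x u v" "D2 f x u v \<le> D2 g x u v + e"
      using lower upper by blast+
    then show False using ne unfolding e_def by (cases "D2 f x u v < D2 g x u v") (simp_all add: abs_if field_simps)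
  qed
  then show "f (x + u + v) - f (x + u) - f (x + v) + f x
         = g (x + u + v) - g (x + u) - g (x + v) + g x" by (simp add: D2_def)
qed

end
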